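(* For any positive integers $r,t$ and positive real number $k'$ there exists a real number $\alpha=\alpha(r,t,k')>0$ such that the following holds. Let $\ell$ be a nonnegative integer or $\infty$, let $b$ be a positive integer, let $\epsilon'\ge0$ be real, let $G$ be a graph, $Y\subseteq V(G)$, and let $\mathcal C$ be a collection of pairwise disjoint connected subgraphs of $G-Y$, each with at most $b$ vertices, each $r$-adherent to $Y$ and each of radius at most $\ell$. Then at least one of the following holds: (1) there exists a graph $L$ with $|E(L)|>k'|V(L)|^{1+\epsilon'}$ such that $G$ contains a subgraph isomorphic to a $[2\ell+1]$-subdivision of $L$ whose branch vertices all lie in $Y$; (2) there exist $r$ distinct vertices $y_1,\dots,y_r\in Y$ and $t$ distinct members $C_1,\dots,C_t\in\mathcal C$ such that each $y_i$ has a neighbour in $V(C_j)$ for all $i\in[r]$, $j\in[t]$; (3) $|\mathcal C|\le\alpha|Y|^{1+\epsilon'(r-1)}$.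
   Context: Graphs are finite and simple. A subgraph $L$ of $G$ is $r$-adherent to $Y\subseteq V(G)$ if $V(L)\cap Y=\emptyset$ and at least $r$ vertices of $Y$ have a neighbour in $V(L)$. The radius of a connected graph is the least $k$ such that some vertex is at distance at most $k$ from every vertex. For a positive integer $m$, $[m]=\{1,\dots,m\}$, and $[\infty]$ denotes the set of all positive integers. For a set $S$ of nonnegative integers, an $S$-subdivision of a graph $L$ is obtained by subdividing each edge $e$ of $L$ exactly $s_e$ times for some $s_e\in S$; the vertices of $L$ are the branch vertices. *)

theory Defs
  imports Complex_Main "HOL-Library.Extended_Nat"
begin

type_synonym 'a graph = "'a set \<times> 'a set set"

definition graph :: "'a graph \<Rightarrow> bool" where
  "graph G \<longleftrightarrow> finite (fst G) \<and>
     (\<forall>e\<in>snd G. \<exists>u v. e = {u, v} \<and> u \<noteq> v \<and> u \<in> fst G \<and> v \<in> fst G)"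

definition subgraph :: "'a graph \<Rightarrow> 'a graph \<Rightarrow> bool" where
  "subgraph H G \<longleftrightarrow> graph H \<and> fst H \<subseteq> fst G \<and> snd H \<subseteq> snd G"

text \<open>Walks (sequences of vertices, consecutive ones adjacent) and paths (walks without
  repeated vertices). A walk given by list p has length (number of edges) length p - 1.\<close>

definition is_walk :: "'a graph \<Rightarrow> 'a list \<Rightarrow> bool" where
  "is_walk G p \<longleftrightarrow> p \<noteq> [] \<and> set p \<subseteq> fst G \<and>
     (\<forall>i. Suc i < length p \<longrightarrow> {p ! i, p ! Suc i} \<in> snd G)"

definition is_path :: "'a graph \<Rightarrow> 'a list \<Rightarrow> bool" where
  "is_path G p \<longleftrightarrow> is_walk G p \<and> distinct p"

definition connected_graph :: "'a graph \<Rightarrow> bool" where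
  "connected_graph G \<longleftrightarrow> fst G \<noteq> {} \<and>
     (\<forall>u\<in>fst G. \<forall>v\<in>fst G. \<exists>p. is_walk G p \<and> hd p = u \<and> last p = v)"

definition radius_le :: "'a graph \<Rightarrow> enat \<Rightarrow> bool" where
  "radius_le G l \<longleftrightarrow> (\<exists>c\<in>fst G. \<forall>v\<in>fst G.
     \<exists>p. is_walk G p \<and> hd p = c \<and> last p = v \<and> enat (length p - 1) \<le> l)"

definition adherent :: "'a graph \<Rightarrow> nat \<Rightarrow> 'a graph \<Rightarrow> 'a set \<Rightarrow> bool" where
  "adherent G r L Y \<longleftrightarrow> fst L \<inter> Y = {} \<and>
     r \<le> card {y\<in>Y. \<exists>v\<in>fst L. {y, v} \<in> snd G}"

text \<open>G contains a subgraph isomorphic to an S-subdivision of L whose branch vertices all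
  lie in Y: branch vertices are mapped injectively by phi into Y, each edge e = uv of L is
  realised by a path P e of G from phi u to phi v with exactly s_e \<in> S internal vertices;
  internal vertices avoid branch vertices and paths of distinct edges are internally
  disjoint.\<close>

definition has_subdivision_in ::
    "'a graph \<Rightarrow> 'b graph \<Rightarrow> nat set \<Rightarrow> 'a set \<Rightarrow> bool" where
  "has_subdivision_in G L S Y \<longleftrightarrow>
     (\<exists>(\<phi>::'b \<Rightarrow> 'a) (P::'b set \<Rightarrow> 'a list).
        inj_on \<phi> (fst L) \<and> \<phi> ` fst L \<subseteq> Y \<and>
        (\<forall>e\<in>snd L. \<exists>u v. e = {u, v} \<and> is_path G (P e) \<and> length (P e) \<ge> 2 \<and>
            hd (P e) = \<phi> u \<and> last (P e) = \<phi> v \<and> length (P e) - 2 \<in> S \<and>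
            set (butlast (tl (P e))) \<inter> \<phi> ` fst L = {}) \<and>
        (\<forall>e\<in>snd L. \<forall>e'\<in>snd L. e \<noteq> e' \<longrightarrow>
            set (butlast (tl (P e))) \<inter> set (butlast (tl (P e'))) = {}))"

end

theory Submission
  imports Defs
begin


lemma walk_single: "is_walk G [x] \<longleftrightarrow> x \<in> fst G"
  by (simp add: is_walk_def)

lemma walk_Cons2: "is_walk G (x # y # ys) \<longleftrightarrow> x \<in> fst G \<and> {x,y} \<in> snd G \<and> is_walk G (y # ys)"
proof
  assume a: "is_walk G (x # y # ys)"
  then have "{x,y} \<in> snd G" unfolding is_walk_def by (metis Suc_less_eq length_Cons nth_Cons_0 nth_Cons_Suc zero_less_Suc)
  moreover have "is_walk G (y # ys)" using a unfolding is_walk_def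
    by (metis (no_types, lifting) Suc_less_eq length_Cons list.distinct(1) nth_Cons_Suc order_trans set_subset_Cons)
  ultimately show "x \<in> fst G \<and> {x,y} \<in> snd G \<and> is_walk G (y # ys)" using a by (simp add: is_walk_def)
next
  assume a: "x \<in> fst G \<and> {x,y} \<in> snd G \<and> is_walk G (y # ys)"
  show "is_walk G (x # y # ys)" unfolding is_walk_def
  proof (intro conjI allI impI)
    show "set (x # y # ys) \<subseteq> fst G" using a by (auto simp: is_walk_def)
    fix i assume "Suc i < length (x # y # ys)"
    then show "{(x # y # ys) ! i, (x # y # ys) ! Suc i} \<in> snd G"
      using a by (cases i) (auto simp: is_walk_def)
  qed simp
qed

lemma walk_tl: "is_walk G (x # ys) \<Longrightarrow> ys \<noteq> [] \<Longrightarrow> is_walk G ys"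
  by (cases ys) (auto simp: walk_Cons2)

lemma walk_suffix: "is_walk G (a @ zs) \<Longrightarrow> zs \<noteq> [] \<Longrightarrow> is_walk G zs"
  by (induction a) (auto dest: walk_tl)

lemma walk_nonempty: "is_walk G p \<Longrightarrow> p \<noteq> []" by (simp add: is_walk_def)

lemma walk_append: "is_walk G xs \<Longrightarrow> is_walk G ys \<Longrightarrow> last xs = hd ys \<Longrightarrow> is_walk G (xs @ tl ys)"
proof (induction xs)
  case Nil then show ?case by (simp add: is_walk_def)
next
  case (Cons x xs)
  show ?case
  proof (cases xs)
    case Nil
    then show ?thesis using Cons walk_nonempty[OF Cons(3)] by (cases ys) auto
  next
    case (Cons y zs)
    then have "is_walk G (xs @ tl ys)" using Cons.IH Cons.prems by (auto dest: walk_tl)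
    then show ?thesis using Cons.prems \<open>xs = y # zs\<close> by (auto simp: walk_Cons2)
  qed
qed

lemma last_append_tl: "ys \<noteq> [] \<Longrightarrow> xs \<noteq> [] \<Longrightarrow> last xs = hd ys \<Longrightarrow> last (xs @ tl ys) = last ys"
  by (cases ys) auto

lemma walk_rev: "is_walk G w \<Longrightarrow> is_walk G (rev w)"
proof (induction w)
  case Nil then show ?case by (simp add: is_walk_def)
next
  case (Cons x w)
  show ?case
  proof (cases w)
    case Nil then show ?thesis using Cons by simp
  next
    case (Cons y zs)
    then have w: "is_walk G w" "x \<in> fst G" "{x,y} \<in> snd G" using Cons.prems by (auto simp: walk_Cons2)
    have "is_walk G [y, x]" using w Cons by (auto simp: walk_Cons2 walk_single insert_commute is_walk_def)
    from walk_append[OF Cons.IH[OF w(1)] this] show ?thesis using Cons by simp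
  qed
qed

lemma walk_to_path: "is_walk G w \<Longrightarrow> \<exists>p. is_path G p \<and> hd p = hd w \<and> last p = last w \<and> set p \<subseteq> set w \<and> length p \<le> length w"
proof (induction w)
  case Nil then show ?case by (simp add: is_walk_def)
next
  case (Cons x w)
  show ?case
  proof (cases "w = []")
    case True
    have "is_path G [x]" using Cons.prems True by (simp add: is_path_def)
    then show ?thesis using True by (intro exI[of _ "[x]"]) simp
  next
    case False
    have ww: "is_walk G w" by (rule walk_tl[OF Cons.prems False])
    from Cons.IH[OF ww] obtain p' where p': "is_path G p'" "hd p' = hd w" "last p' = last w" "set p' \<subseteq> set w" "length p' \<le> length w"
      by blast
    show ?thesis
    proof (cases "x \<in> set p'")
      case True
      from split_list[OF True] obtain a b where ab: "p' = a @ x # b" by blast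
      have "is_walk G (a @ (x # b))" "distinct (a @ x # b)" using p'(1) ab by (simp_all add: is_path_def)
      then have "is_walk G (x # b)" "distinct (x # b)" using walk_suffix[of G a "x # b"] by simp_all
      then have pp: "is_path G (x # b)" by (simp add: is_path_def)
      have l1: "last (x # b) = last (x # w)" using p'(3) ab False by (simp add: last_append)
      have s1: "set (x # b) \<subseteq> set (x # w)" using p'(4) ab by auto
      have n1: "length (x # b) \<le> length (x # w)" using p'(5) ab by simp
      show ?thesis using pp l1 s1 n1 by (intro exI[of _ "x # b"]) simp
    next
      case xn: False
      have pn: "p' \<noteq> []" using p'(1) by (simp add: is_path_def is_walk_def)
      have "w = hd w # tl w" using False by simp
      then have xe: "x \<in> fst G" "{x, hd w} \<in> snd G" using Cons.prems by (metis walk_Cons2)+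
      have "p' = hd p' # tl p'" using pn by simp
      then have "is_walk G (x # p') = (x \<in> fst G \<and> {x, hd p'} \<in> snd G \<and> is_walk G p')"
        by (metis walk_Cons2)
      then have pw: "is_walk G (x # p')" using xe p'(1,2) by (simp add: is_path_def)
      have "distinct (x # p')" using xn p'(1) by (simp add: is_path_def)
      then have pp: "is_path G (x # p')" using pw by (simp add: is_path_def)
      have l1: "last (x # p') = last (x # w)" using p'(3) pn False by simp
      have s1: "set (x # p') \<subseteq> set (x # w)" using p'(4) by auto
      have n1: "length (x # p') \<le> length (x # w)" using p'(5) by simp
      show ?thesis using pp l1 s1 n1 by (intro exI[of _ "x # p'"]) simp
    qed
  qed
qed

lemma walk_sub: "subgraph C G \<Longrightarrow> is_walk C p \<Longrightarrow> is_walk G p"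
  by (auto simp: subgraph_def is_walk_def)



lemma path_through:
  assumes sub: "subgraph C G" and rad: "radius_le C l" and v: "v1 \<in> fst C" "v2 \<in> fst C"
    and y: "y1 \<notin> fst C" "y2 \<notin> fst C" "y1 \<noteq> y2" "y1 \<in> fst G" "y2 \<in> fst G"
    and e: "{y1,v1} \<in> snd G" "{y2,v2} \<in> snd G"
  shows "\<exists>p. is_path G p \<and> 2 \<le> length p \<and> hd p = y1 \<and> last p = y2 \<and> 1 \<le> length p - 2
     \<and> enat (length p - 2) \<le> 2*l+1 \<and> set (butlast (tl p)) \<subseteq> fst C"
proof -
  obtain c where c: "c \<in> fst C" and call: "\<forall>v\<in>fst C. \<exists>p. is_walk C p \<and> hd p = c \<and> last p = v \<and> enat (length p - 1) \<le> l"
    using rad unfolding radius_le_def by blast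
  obtain w1 where w1: "is_walk C w1" "hd w1 = c" "last w1 = v1" "enat (length w1 - 1) \<le> l" using call v by blast
  obtain w2 where w2: "is_walk C w2" "hd w2 = c" "last w2 = v2" "enat (length w2 - 1) \<le> l" using call v by blast
  have ne: "w1 \<noteq> []" "w2 \<noteq> []" using w1 w2 walk_nonempty by blast+
  define w where "w = rev w1 @ tl w2"
  have lr: "last (rev w1) = hd w2" using w1(2) w2(2) ne by (simp add: last_rev)
  have ww: "is_walk C w" unfolding w_def by (rule walk_append[OF walk_rev[OF w1(1)] w2(1) lr])
  have "hd (rev w1) = v1" using ne w1(3) by (simp add: hd_rev)
  then have hw: "hd w = v1" unfolding w_def using ne by simp
  have "last (rev w1 @ tl w2) = last w2" by (rule last_append_tl) (use ne lr in simp_all)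
  then have lw: "last w = v2" unfolding w_def using w2(3) by simp
  have len: "length w = length w1 + length w2 - 1" unfolding w_def using ne by (cases w2) auto
  from walk_to_path[OF ww] obtain q where q0: "is_path C q" "hd q = hd w" "last q = last w" "set q \<subseteq> set w" "length q \<le> length w"
    by blast
  have q: "is_path C q" "hd q = v1" "last q = v2" "set q \<subseteq> set w" "length q \<le> length w"
    using q0 hw lw by simp_all
  have qw: "is_walk G q" using walk_sub[OF sub] q(1) unfolding is_path_def by blast
  have qne: "q \<noteq> []" using qw walk_nonempty by blast
  have setw: "set w \<subseteq> fst C" using ww by (simp add: is_walk_def)
  have v1G: "v1 \<in> fst G" "v2 \<in> fst G" using sub v by (auto simp: subgraph_def)
  have a1: "is_walk G [y1, v1]" using y v1G e by (simp add: walk_Cons2 walk_single)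
  have a2: "is_walk G [v2, y2]" using y v1G e by (simp add: walk_Cons2 walk_single insert_commute)
  have "is_walk G ([y1, v1] @ tl q)" using walk_append[OF a1 qw] q by simp
  moreover have "[y1, v1] @ tl q = y1 # q" using qne q(2) by (cases q) auto
  ultimately have b1: "is_walk G (y1 # q)" by simp
  have "is_walk G ((y1 # q) @ tl [v2, y2])" using walk_append[OF b1 a2] q qne by simp
  then have pw: "is_walk G (y1 # q @ [y2])" by simp
  have "distinct (y1 # q @ [y2])" using q(1,4) setw y by (auto simp: is_path_def)
  then have pp: "is_path G (y1 # q @ [y2])" using pw by (simp add: is_path_def)
  have lq: "length q \<le> (length w1 - 1) + (length w2 - 1) + 1" using q(5) len ne by (cases w1; cases w2; auto)
  have "enat (length q) \<le> enat ((length w1 - 1) + (length w2 - 1) + 1)"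
    using lq by (simp only: enat_ord_simps)
  also have "\<dots> = enat (length w1 - 1) + enat (length w2 - 1) + 1"
    by (simp add: one_enat_def)
  also have "\<dots> \<le> l + l + 1" using w1(4) w2(4) by (intro add_mono) auto
  also have "\<dots> = 2*l+1" by (simp add: mult_2)
  finally have eq: "enat (length q) \<le> 2*l+1" .
  have q1: "1 \<le> length q" using qne by (cases q) auto
  have qC: "set q \<subseteq> fst C" using q(4) setw by blast
  show ?thesis
  proof (intro exI[of _ "y1 # q @ [y2]"] conjI)
    show "is_path G (y1 # q @ [y2])" by (rule pp)
    show "2 \<le> length (y1 # q @ [y2])" by simp
    show "hd (y1 # q @ [y2]) = y1" by simp
    show "last (y1 # q @ [y2]) = y2" by simp
    show "1 \<le> length (y1 # q @ [y2]) - 2" using q1 by simp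
    show "enat (length (y1 # q @ [y2]) - 2) \<le> 2*l+1" using eq by simp
    show "set (butlast (tl (y1 # q @ [y2]))) \<subseteq> fst C" using qC by simp
  qed
qed

lemma realize:
  fixes \<C> :: "'a graph set" and g :: "'a set \<Rightarrow> 'a graph"
  assumes G: "graph G" "Y \<subseteq> fst G"
    and Cs: "\<forall>C\<in>\<C>. subgraph C G \<and> fst C \<inter> Y = {} \<and> radius_le C l"
    and disj: "\<forall>C\<in>\<C>. \<forall>D\<in>\<C>. C \<noteq> D \<longrightarrow> fst C \<inter> fst D = {}"
    and U: "U \<subseteq> Y" and inj: "inj_on g E"
    and E: "\<forall>q\<in>E. card q = 2 \<and> q \<subseteq> U \<and> g q \<in> \<C> \<and> (\<forall>y\<in>q. \<exists>v\<in>fst (g q). {y,v} \<in> snd G)"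
  shows "graph (U,E) \<and> has_subdivision_in G (U,E) {s. 1 \<le> s \<and> enat s \<le> 2*l+1} Y"
proof
  have "finite (fst G)" using G unfolding graph_def by blast
  then have fU: "finite U" using U G(2) by (meson finite_subset)
  have "\<forall>e\<in>E. \<exists>u v. e = {u, v} \<and> u \<noteq> v \<and> u \<in> U \<and> v \<in> U"
  proof
    fix e assume "e \<in> E"
    then have "card e = 2" "e \<subseteq> U" using E by auto
    then obtain u v where "e = {u,v}" "u \<noteq> v" by (meson card_2_iff)
    then show "\<exists>u v. e = {u, v} \<and> u \<noteq> v \<and> u \<in> U \<and> v \<in> U" using \<open>e \<subseteq> U\<close> by blast
  qed
  then show "graph (U,E)" unfolding graph_def using fU by simp
  let ?S = "{s. 1 \<le> s \<and> enat s \<le> 2*l+1}"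
  have "\<forall>q\<in>E. \<exists>p. \<exists>u v. q = {u,v} \<and> is_path G p \<and> 2 \<le> length p \<and> hd p = u \<and> last p = v
      \<and> length p - 2 \<in> ?S \<and> set (butlast (tl p)) \<subseteq> fst (g q)"
  proof
    fix q assume qE: "q \<in> E"
    then obtain u v where uv: "q = {u,v}" "u \<noteq> v" using E by (meson card_2_iff)
    have C: "g q \<in> \<C>" "subgraph (g q) G" "fst (g q) \<inter> Y = {}" "radius_le (g q) l" using E Cs qE by auto
    obtain v1 where v1: "v1 \<in> fst (g q)" "{u,v1} \<in> snd G" using E qE uv by blast
    obtain v2 where v2: "v2 \<in> fst (g q)" "{v,v2} \<in> snd G" using E qE uv by blast
    have "q \<subseteq> U" using E qE by blast
    then have uY: "u \<in> Y" "v \<in> Y" using uv U by auto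
    obtain p where "is_path G p \<and> 2 \<le> length p \<and> hd p = u \<and> last p = v \<and> 1 \<le> length p - 2
     \<and> enat (length p - 2) \<le> 2*l+1 \<and> set (butlast (tl p)) \<subseteq> fst (g q)"
      using path_through[OF C(2) C(4) v1(1) v2(1) _ _ uv(2) _ _ v1(2) v2(2)] uY C(3) G(2) by blast
    then show "\<exists>p. \<exists>u v. q = {u,v} \<and> is_path G p \<and> 2 \<le> length p \<and> hd p = u \<and> last p = v
      \<and> length p - 2 \<in> ?S \<and> set (butlast (tl p)) \<subseteq> fst (g q)" using uv(1) by blast
  qed
  from bchoice[OF this] obtain P where P: "\<forall>q\<in>E. \<exists>u v. q = {u,v} \<and> is_path G (P q) \<and> 2 \<le> length (P q) \<and> hd (P q) = u \<and> last (P q) = v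
      \<and> length (P q) - 2 \<in> ?S \<and> set (butlast (tl (P q))) \<subseteq> fst (g q)" by blast
  have inner: "set (butlast (tl (P e))) \<subseteq> fst (g e)" "g e \<in> \<C>" if "e \<in> E" for e
    using P that E by blast+
  show "has_subdivision_in G (U,E) ?S Y" unfolding has_subdivision_in_def
  proof (intro exI[of _ id] exI[of _ P] conjI ballI impI)
    show "inj_on id (fst (U, E))" by simp
    show "id ` fst (U, E) \<subseteq> Y" using U by simp
  next
    fix e assume eE0: "e \<in> snd (U,E)"
    then have eE: "e \<in> E" by simp
    have ce: "g e \<in> \<C>" using inner eE by blast
    then have "fst (g e) \<inter> Y = {}" using Cs by blast
    then have dj: "set (butlast (tl (P e))) \<inter> id ` fst (U,E) = {}" using inner(1)[OF eE] U by auto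
    obtain u v where uv: "e = {u,v}" "is_path G (P e)" "2 \<le> length (P e)" "hd (P e) = u" "last (P e) = v"
      "length (P e) - 2 \<in> ?S" using P eE by blast
    show "\<exists>u v. e = {u, v} \<and> is_path G (P e) \<and> 2 \<le> length (P e) \<and> hd (P e) = id u \<and> last (P e) = id v
      \<and> length (P e) - 2 \<in> ?S \<and> set (butlast (tl (P e))) \<inter> id ` fst (U, E) = {}"
      using uv dj by (intro exI[of _ u] exI[of _ v]) simp
  next
    fix e e' assume eE0: "e \<in> snd (U,E)" "e' \<in> snd (U,E)" "e \<noteq> e'"
    then have eE: "e \<in> E" "e' \<in> E" by simp_all
    then have "g e \<noteq> g e'" using inj eE0(3) by (meson inj_onD)
    moreover have "g e \<in> \<C>" "g e' \<in> \<C>" using inner eE by blast+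
    ultimately have "fst (g e) \<inter> fst (g e') = {}" using disj by blast
    then show "set (butlast (tl (P e))) \<inter> set (butlast (tl (P e'))) = {}"
      using inner(1)[OF eE(1)] inner(1)[OF eE(2)] by blast
  qed
qed



definition clq :: "nat \<Rightarrow> 'a set \<Rightarrow> 'a set set \<Rightarrow> 'a set set" where
  "clq r U E = {T. T \<subseteq> U \<and> card T = r \<and> (\<forall>a\<in>T. \<forall>b\<in>T. a \<noteq> b \<longrightarrow> {a,b} \<in> E)}"

lemma card_fibers:
  assumes "finite A" "finite B" "\<forall>a\<in>A. f a \<in> B" "\<forall>b\<in>B. card {a\<in>A. f a = b} \<le> m"
  shows "card A \<le> m * card B"
proof -
  have "A = (\<Union>b\<in>B. {a\<in>A. f a = b})" using assms by auto
  then have "card A \<le> (\<Sum>b\<in>B. card {a\<in>A. f a = b})" using card_UN_le[OF assms(2), of "\<lambda>b. {a\<in>A. f a = b}"] by simp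
  also have "\<dots> \<le> (\<Sum>b\<in>B. m)" using assms(4) by (intro sum_mono) auto
  finally show ?thesis by (simp add: mult.commute)
qed

lemma clique_bound:
  fixes E :: "'a set set" and B :: real
  assumes fin: "finite U" and B: "B \<ge> 0" and r: "r \<ge> 1"
    and dens: "\<forall>W\<subseteq>U. 2 * real (card {e\<in>E. e \<subseteq> W}) \<le> B * real (card W)"
    and E2: "\<forall>e\<in>E. card e = 2"
  shows "real (card (clq r U E)) \<le> real (card U) * B^(r-1)"
  using fin
proof (induction U rule: finite_remove_induct)
  case empty
  have "clq r {} E = {}" using r by (auto simp: clq_def)
  then show ?case by simp
next
  case (remove A)
  define EA where "EA = {e\<in>E. e \<subseteq> A}"
  define deg where "deg v = card {e\<in>EA. v \<in> e}" for v
  have finEA: "finite EA" unfolding EA_def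
    by (rule finite_subset[of _ "Pow A"]) (auto simp: remove(1))
  have sdeg: "(\<Sum>v\<in>A. deg v) = 2 * card EA" unfolding deg_def
  proof (rule sum_multicount[OF remove(1) finEA])
    show "\<forall>j\<in>EA. card {i \<in> A. i \<in> j} = 2"
    proof
      fix j assume "j \<in> EA"
      then have "{i \<in> A. i \<in> j} = j" "card j = 2" using E2 by (auto simp: EA_def)
      then show "card {i \<in> A. i \<in> j} = 2" by simp
    qed
  qed
  have "2 * real (card EA) \<le> B * real (card A)"
    using dens remove(3) unfolding EA_def by simp
  moreover have "real (\<Sum>v\<in>A. deg v) = real (2 * card EA)" using sdeg by (rule arg_cong)
  ultimately have sumd: "real (\<Sum>v\<in>A. deg v) \<le> B * real (card A)"
    by simp
  define v where "v = arg_min_on deg A"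
  have vA: "v \<in> A" and vmin: "\<forall>u\<in>A. deg v \<le> deg u"
    using arg_min_if_finite[OF remove(1,2), of deg] unfolding v_def by (auto simp: not_less)
  have "real (card A) * real (deg v) = (\<Sum>u\<in>A. real (deg v))" by simp
  also have "\<dots> \<le> (\<Sum>u\<in>A. real (deg u))" using vmin by (intro sum_mono) auto
  also have "\<dots> \<le> B * real (card A)" using sumd by simp
  finally have "real (card A) * real (deg v) \<le> real (card A) * B" by (simp add: mult.commute)
  moreover have "card A > 0" using remove(1,2) by (simp add: card_gt_0_iff)
  ultimately have degB: "real (deg v) \<le> B" by simp
  define N where "N = {u\<in>A. {u,v} \<in> E}"
  have "card N \<le> deg v" unfolding deg_def
  proof (rule card_inj_on_le[of "\<lambda>u. {u,v}"])
    show "inj_on (\<lambda>u. {u, v}) N" by (auto simp: inj_on_def doubleton_eq_iff)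
    show "(\<lambda>u. {u, v}) ` N \<subseteq> {e \<in> EA. v \<in> e}" using vA by (auto simp: N_def EA_def)
    show "finite {e \<in> EA. v \<in> e}" using finEA by simp
  qed
  then have cN: "real (card N) \<le> B" using degB by linarith
  have finN: "finite N" using remove(1) by (simp add: N_def)
  let ?K = "clq r A E"
  have split: "?K \<subseteq> {T\<in>?K. v \<in> T} \<union> clq r (A - {v}) E" by (auto simp: clq_def)
  have "card {T\<in>?K. v \<in> T} \<le> card {X. X \<subseteq> N \<and> card X = r - 1}"
  proof (rule card_inj_on_le[of "\<lambda>T. T - {v}"])
    show "inj_on (\<lambda>T. T - {v}) {T \<in> ?K. v \<in> T}" by (rule inj_onI) (metis (no_types, lifting) insert_Diff mem_Collect_eq)
    show "(\<lambda>T. T - {v}) ` {T \<in> ?K. v \<in> T} \<subseteq> {X. X \<subseteq> N \<and> card X = r - 1}"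
    proof
      fix X assume "X \<in> (\<lambda>T. T - {v}) ` {T \<in> ?K. v \<in> T}"
      then obtain T where T: "T \<in> ?K" "v \<in> T" "X = T - {v}" by blast
      have "T \<subseteq> A" using T(1) by (simp add: clq_def)
      then have "finite T" using remove(1) by (rule finite_subset)
      then have "card X = r - 1" using T by (auto simp: clq_def)
      moreover have "X \<subseteq> N" using T by (auto simp: clq_def N_def)
      ultimately show "X \<in> {X. X \<subseteq> N \<and> card X = r - 1}" by simp
    qed
    show "finite {X. X \<subseteq> N \<and> card X = r - 1}" using finN by simp
  qed
  also have "\<dots> = card N choose (r - 1)" using n_subsets[OF finN] by simp
  finally have c1: "card {T\<in>?K. v \<in> T} \<le> card N choose (r - 1)" .
  have c1': "real (card {T\<in>?K. v \<in> T}) \<le> B^(r-1)"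
  proof (cases "r - 1 \<le> card N")
    case True
    have "card {T\<in>?K. v \<in> T} \<le> card N ^ (r-1)" using c1 binomial_le_pow[OF True] by linarith
    then have "real (card {T\<in>?K. v \<in> T}) \<le> real (card N) ^ (r-1)" by (metis of_nat_le_iff of_nat_power)
    also have "\<dots> \<le> B^(r-1)" using cN by (intro power_mono) auto
    finally show ?thesis .
  next
    case False
    then have "card N choose (r-1) = 0" by (intro binomial_eq_0) simp
    then have "card {T\<in>?K. v \<in> T} = 0" using c1 by linarith
    then show ?thesis using B by simp
  qed
  have IH: "real (card (clq r (A - {v}) E)) \<le> real (card (A - {v})) * B^(r-1)" using remove(4)[OF vA] .
  have finK: "finite (clq r (A - {v}) E)" 
    by (rule finite_subset[of _ "Pow (A - {v})"]) (auto simp: clq_def remove(1))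
  have finK2: "finite {T\<in>?K. v \<in> T}" 
    by (rule finite_subset[of _ "Pow A"]) (auto simp: clq_def remove(1))
  have "card ?K \<le> card ({T\<in>?K. v \<in> T} \<union> clq r (A - {v}) E)"
    using split finK finK2 by (intro card_mono) auto
  also have "\<dots> \<le> card {T\<in>?K. v \<in> T} + card (clq r (A - {v}) E)" by (rule card_Un_le)
  finally have X: "real (card ?K) \<le> B^(r-1) + real (card (A - {v})) * B^(r-1)" using c1' IH by linarith
  have "real (card (A - {v})) = real (card A) - 1"
    using vA remove(1) \<open>card A > 0\<close> by (simp add: card_Diff_singleton of_nat_diff)
  then have "B^(r-1) + real (card (A - {v})) * B^(r-1) = real (card A) * B^(r-1)"
    by (metis add.commute diff_add_cancel distrib_right mult_1)
  then show ?case using X by simp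
qed



lemma taut3: "(\<not> P \<Longrightarrow> \<not> Q \<Longrightarrow> R) \<Longrightarrow> P \<or> Q \<or> R" by blast

theorem mainTheorem8:
  fixes r t :: nat and k' :: real
  assumes "r > 0" and "t > 0" and "k' > 0"
  shows "\<exists>\<alpha>::real. \<alpha> > 0 \<and>
    (\<forall>(l::enat) (b::nat) (\<epsilon>'::real) (G::nat graph) (Y::nat set)
        (\<C>::nat graph set).
      b > 0 \<longrightarrow> \<epsilon>' \<ge> 0 \<longrightarrow> graph G \<longrightarrow> Y \<subseteq> fst G \<longrightarrow>
      (\<forall>C\<in>\<C>. subgraph C G \<and> fst C \<inter> Y = {} \<and> connected_graph C \<and>
               card (fst C) \<le> b \<and> adherent G r C Y \<and> radius_le C l) \<longrightarrow>
      (\<forall>C\<in>\<C>. \<forall>D\<in>\<C>. C \<noteq> D \<longrightarrow> fst C \<inter> fst D = {}) \<longrightarrow>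
      (\<exists>L::nat graph. graph L \<and>
          real (card (snd L)) > k' * real (card (fst L)) powr (1 + \<epsilon>') \<and>
          has_subdivision_in G L {s. 1 \<le> s \<and> enat s \<le> 2 * l + 1} Y)
      \<or> (\<exists>Ys Cs. Ys \<subseteq> Y \<and> card Ys = r \<and> Cs \<subseteq> \<C> \<and> card Cs = t \<and>
            (\<forall>y\<in>Ys. \<forall>C\<in>Cs. \<exists>v\<in>fst C. {y, v} \<in> snd G))
      \<or> real (card \<C>) \<le> \<alpha> * real (card Y) powr (1 + \<epsilon>' * (real r - 1)))"
proof -
  define \<alpha> where "\<alpha> = k' + real (t-1) * (2*k')^(r-1) + 1"
  have "0 \<le> real (t-1) * (2*k')^(r-1)" using assms by simp
  then have apos: "\<alpha> > 0" unfolding \<alpha>_def using assms by linarith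
  show ?thesis
  proof (intro exI[of _ \<alpha>] conjI allI impI apos)
    fix l :: enat and b :: nat and \<epsilon>' :: real and G :: "nat graph" and Y :: "nat set" and \<C> :: "nat graph set"
    assume b: "b > 0" and eps: "\<epsilon>' \<ge> 0" and G: "graph G" and Y: "Y \<subseteq> fst G"
      and Cs: "\<forall>C\<in>\<C>. subgraph C G \<and> fst C \<inter> Y = {} \<and> connected_graph C \<and>
               card (fst C) \<le> b \<and> adherent G r C Y \<and> radius_le C l"
      and disj: "\<forall>C\<in>\<C>. \<forall>D\<in>\<C>. C \<noteq> D \<longrightarrow> fst C \<inter> fst D = {}"
    let ?A = "\<exists>L::nat graph. graph L \<and>
          real (card (snd L)) > k' * real (card (fst L)) powr (1 + \<epsilon>') \<and>
          has_subdivision_in G L {s. 1 \<le> s \<and> enat s \<le> 2 * l + 1} Y"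
    let ?B = "\<exists>Ys Cs. Ys \<subseteq> Y \<and> card Ys = r \<and> Cs \<subseteq> \<C> \<and> card Cs = t \<and>
            (\<forall>y\<in>Ys. \<forall>C\<in>Cs. \<exists>v\<in>fst C. {y, v} \<in> snd G)"
    let ?X = "real (card Y) powr (1 + \<epsilon>' * (real r - 1))"
    have X0: "?X \<ge> 0" by simp
    have main: "real (card \<C>) \<le> \<alpha> * ?X" if nA: "\<not> ?A" and nB: "\<not> ?B"
    proof -
      have "finite (fst G)" using G unfolding graph_def by blast
      then have finY: "finite Y" using Y by (rule finite_subset[rotated])
      define n where "n = card Y"
      define N where "N C = {y\<in>Y. \<exists>v\<in>fst C. {y,v} \<in> snd G}" for C :: "nat graph"
      have rN: "\<forall>C\<in>\<C>. r \<le> card (N C)"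
      proof
        fix C assume "C \<in> \<C>"
        then have "adherent G r C Y" using Cs by blast
        then show "r \<le> card (N C)" unfolding adherent_def N_def by blast
      qed
      show "real (card \<C>) \<le> \<alpha> * ?X"
      proof (cases "finite \<C> \<and> n > 0")
        case False
        then consider "infinite \<C>" | "n = 0" by blast
        then show ?thesis
        proof cases
          case 1
          then have "card \<C> = 0" by (rule card.infinite)
          moreover have "0 \<le> \<alpha> * ?X" using apos X0 by (intro mult_nonneg_nonneg) auto
          ultimately show ?thesis by simp
        next
          case 2
          then have Y0: "Y = {}" using finY unfolding n_def by (meson card_0_eq)
          have "\<C> = {}"
          proof (rule ccontr)
            assume "\<C> \<noteq> {}"
            then obtain C where "C \<in> \<C>" by blast
            then have "r \<le> card (N C)" using rN by blast
            moreover have "N C = {}" unfolding N_def Y0 by blast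
            ultimately show False using assms(1) by simp
          qed
          then have "card \<C> = 0" by simp
          moreover have "0 \<le> \<alpha> * ?X" using apos X0 by (intro mult_nonneg_nonneg) auto
          ultimately show ?thesis by simp
        qed
      next
        case True
        then have finC: "finite \<C>" and npos: "n > 0" by auto
        have "\<forall>C\<in>\<C>. \<exists>T. T \<subseteq> N C \<and> card T = r"
        proof
          fix C assume "C \<in> \<C>"
          then have "r \<le> card (N C)" using rN by blast
          then obtain T where "T \<subseteq> N C" "card T = r" "finite T" by (rule obtain_subset_with_card_n)
          then show "\<exists>T. T \<subseteq> N C \<and> card T = r" by blast
        qed
        from bchoice[OF this] obtain S where S: "\<forall>C\<in>\<C>. S C \<subseteq> N C \<and> card (S C) = r" by blast
        have SY: "\<forall>C\<in>\<C>. S C \<subseteq> Y"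
        proof
          fix C assume "C \<in> \<C>"
          then have "S C \<subseteq> N C" using S by blast
          moreover have "N C \<subseteq> Y" unfolding N_def by blast
          ultimately show "S C \<subseteq> Y" by blast
        qed
        have fib: "card {C\<in>\<C>. S C = T} \<le> t - 1" for T
        proof (rule ccontr)
          assume "\<not> card {C\<in>\<C>. S C = T} \<le> t - 1"
          then have "t \<le> card {C\<in>\<C>. S C = T}" by simp
          then obtain Cs' where Cs': "Cs' \<subseteq> {C\<in>\<C>. S C = T}" "card Cs' = t" "finite Cs'" by (rule obtain_subset_with_card_n)
          then have "Cs' \<noteq> {}" using assms(2) by auto
          then obtain C0 where C0: "C0 \<in> Cs'" by blast
          then have C0': "C0 \<in> \<C>" "S C0 = T" using Cs' by auto
          have "?B"
          proof (intro exI[of _ T] exI[of _ Cs'] conjI ballI)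
            show "T \<subseteq> Y" using SY C0' by blast
            show "card T = r" using S C0' by blast
            show "Cs' \<subseteq> \<C>" using Cs' by blast
            show "card Cs' = t" by fact
            fix y C assume "y \<in> T" "C \<in> Cs'"
            then have "y \<in> N C" "C \<in> \<C>" using S Cs' by auto
            then show "\<exists>v\<in>fst C. {y, v} \<in> snd G" by (simp add: N_def)
          qed
          then show False using nB by blast
        qed
        have no1: "real (card E) \<le> k' * real (card U) powr (1+\<epsilon>')"
          if U: "U \<subseteq> Y" and inj: "inj_on g E" and E: "\<forall>q\<in>E. card q = 2 \<and> q \<subseteq> U \<and> g q \<in> \<C> \<and> q \<subseteq> S (g q)"
          for U E g
        proof (rule ccontr)
          assume c: "\<not> real (card E) \<le> k' * real (card U) powr (1+\<epsilon>')"
          have E': "\<forall>q\<in>E. card q = 2 \<and> q \<subseteq> U \<and> g q \<in> \<C> \<and> (\<forall>y\<in>q. \<exists>v\<in>fst (g q). {y,v} \<in> snd G)"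
          proof
            fix q assume q: "q \<in> E"
            then have "q \<subseteq> N (g q)" using E S by blast
            then have e2: "\<forall>y\<in>q. \<exists>v\<in>fst (g q). {y,v} \<in> snd G" unfolding N_def by blast
            have e1: "card q = 2 \<and> q \<subseteq> U \<and> g q \<in> \<C>" using E q by blast
            show "card q = 2 \<and> q \<subseteq> U \<and> g q \<in> \<C> \<and> (\<forall>y\<in>q. \<exists>v\<in>fst (g q). {y,v} \<in> snd G)"
              using e1 e2 by blast
          qed
          have "graph (U,E) \<and> has_subdivision_in G (U,E) {s. 1 \<le> s \<and> enat s \<le> 2*l+1} Y"
            by (rule realize[OF G Y _ disj U inj E']) (use Cs in blast)
          then have ?A using c by (intro exI[of _ "(U,E)"]) auto
          then show False using nA by blast
        qed
        define P2 where "P2 = {q. q \<subseteq> Y \<and> card q = 2}"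
        define Goods where "Goods = {H. H \<subseteq> P2 \<and> (\<exists>g. inj_on g H \<and> (\<forall>q\<in>H. g q \<in> \<C> \<and> q \<subseteq> S (g q)))}"
        have finP2: "finite P2" unfolding P2_def by (rule finite_subset[of _ "Pow Y"]) (auto simp: finY)
        have finG: "finite Goods" unfolding Goods_def by (rule finite_subset[of _ "Pow P2"]) (auto simp: finP2)
        have eG: "{} \<in> Goods" unfolding Goods_def by auto
        define M where "M = Max (card ` Goods)"
        have "M \<in> card ` Goods" unfolding M_def using finG eG by (intro Max_in) auto
        then obtain H where HG: "H \<in> Goods" and HM: "card H = M" by auto
        have maxG: "card H' \<le> M" if "H' \<in> Goods" for H' unfolding M_def using finG that by simp
        obtain g where g: "inj_on g H" "\<forall>q\<in>H. g q \<in> \<C> \<and> q \<subseteq> S (g q)" and HP2: "H \<subseteq> P2"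
          using HG unfolding Goods_def by blast
        have finH: "finite H" using HP2 finP2 finite_subset by blast
        have H2: "\<forall>q\<in>H. card q = 2 \<and> q \<subseteq> Y" using HP2 by (auto simp: P2_def)
        have claimA: "S C \<in> clq r Y H" if C: "C \<in> \<C> - g ` H" for C
        proof -
          have "\<forall>a\<in>S C. \<forall>b\<in>S C. a \<noteq> b \<longrightarrow> {a,b} \<in> H"
          proof (intro ballI impI, rule ccontr)
            fix a b assume ab: "a \<in> S C" "b \<in> S C" "a \<noteq> b" "{a,b} \<notin> H"
            let ?q = "{a,b}"
            let ?g = "g(?q := C)"
            have "insert ?q H \<in> Goods" unfolding Goods_def
            proof (intro CollectI conjI exI[of _ ?g])
              have C1: "C \<in> \<C>" "C \<notin> g ` H" using C by auto
              have qY: "?q \<subseteq> Y" using ab SY C1 by blast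
              have q2: "card ?q = 2" using ab(3) by simp
              show "insert ?q H \<subseteq> P2" using HP2 qY q2 unfolding P2_def by blast
              have "inj_on ?g H"
              proof (rule inj_onI)
                fix x y assume xy: "x \<in> H" "y \<in> H" "?g x = ?g y"
                then have "x \<noteq> ?q" "y \<noteq> ?q" using ab(4) by auto
                then have "g x = g y" using xy(3) by simp
                then show "x = y" using inj_onD[OF g(1) _ xy(1) xy(2)] by blast
              qed
              have hq: "H - {?q} = H" using ab(4) by blast
              have gimg: "?g ` H = g ` H"
              proof (rule image_cong[OF refl])
                fix x assume "x \<in> H" then have "x \<noteq> ?q" using ab(4) by blast
                then show "?g x = g x" by simp
              qed
              have gq: "?g ?q = C" by simp
              have nin: "?g ?q \<notin> ?g ` (H - {?q})" unfolding hq gimg gq using C1(2) .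
              show "inj_on ?g (insert ?q H)" using \<open>inj_on ?g H\<close> nin unfolding inj_on_insert by blast
              show "\<forall>q\<in>insert ?q H. ?g q \<in> \<C> \<and> q \<subseteq> S (?g q)"
              proof
                fix q' assume q': "q' \<in> insert ?q H"
                show "?g q' \<in> \<C> \<and> q' \<subseteq> S (?g q')"
                proof (cases "q' = ?q")
                  case True then show ?thesis using C1 ab(1,2) by simp
                next
                  case False then show ?thesis using q' g(2) by simp
                qed
              qed
            qed
            then have "card (insert ?q H) \<le> M" by (rule maxG)
            then show False using HM finH ab(4) by simp
          qed
          moreover have "C \<in> \<C>" using C by blast
          then have "S C \<subseteq> Y" "card (S C) = r" using SY S by auto
          ultimately show ?thesis unfolding clq_def by blast
        qed
        have finK: "finite (clq r Y H)" unfolding clq_def by (rule finite_subset[of _ "Pow Y"]) (auto simp: finY)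
        have c2: "card (\<C> - g ` H) \<le> (t-1) * card (clq r Y H)"
        proof (rule card_fibers[of _ _ S])
          show "finite (\<C> - g ` H)" using finC by simp
          show "finite (clq r Y H)" by (rule finK)
          show "\<forall>a\<in>\<C> - g ` H. S a \<in> clq r Y H" using claimA by blast
          show "\<forall>T\<in>clq r Y H. card {a \<in> \<C> - g ` H. S a = T} \<le> t - 1"
          proof
            fix T
            have "card {a \<in> \<C> - g ` H. S a = T} \<le> card {C\<in>\<C>. S C = T}" using finC by (intro card_mono) auto
            then show "card {a \<in> \<C> - g ` H. S a = T} \<le> t - 1" using fib[of T] by linarith
          qed
        qed
        have "card \<C> \<le> card (g ` H \<union> (\<C> - g ` H))" using finC finH by (intro card_mono) auto
        also have "\<dots> \<le> card (g ` H) + card (\<C> - g ` H)" by (rule card_Un_le)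
        also have "\<dots> \<le> card H + (t-1) * card (clq r Y H)" using c2 card_image_le[OF finH, of g] by linarith
        finally have "real (card \<C>) \<le> real (card H + (t-1) * card (clq r Y H))"
          by (simp only: of_nat_le_iff)
        then have cC: "real (card \<C>) \<le> real (card H) + real (t-1) * real (card (clq r Y H))"
          by simp
        define B where "B = 2*k' * real n powr \<epsilon>'"
        have B0: "B \<ge> 0" using assms by (simp add: B_def)
        have dens: "\<forall>W\<subseteq>Y. 2 * real (card {e\<in>H. e \<subseteq> W}) \<le> B * real (card W)"
        proof (intro allI impI)
          fix W assume W: "W \<subseteq> Y"
          have i: "inj_on g {e\<in>H. e \<subseteq> W}" by (rule inj_on_subset[OF g(1)]) auto
          have e: "\<forall>q\<in>{e\<in>H. e \<subseteq> W}. card q = 2 \<and> q \<subseteq> W \<and> g q \<in> \<C> \<and> q \<subseteq> S (g q)"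
            using g(2) H2 by auto
          have h1: "real (card {e\<in>H. e \<subseteq> W}) \<le> k' * real (card W) powr (1+\<epsilon>')"
            by (rule no1[OF W i e])
          have h2: "real (card W) powr (1+\<epsilon>') \<le> real (card W) * real n powr \<epsilon>'"
          proof (cases "card W = 0")
            case True then show ?thesis by simp
          next
            case False
            have "real (card W) powr (1+\<epsilon>') = real (card W) * real (card W) powr \<epsilon>'"
              using False by (simp add: powr_add)
            also have "\<dots> \<le> real (card W) * real n powr \<epsilon>'"
              using eps card_mono[OF finY W] by (intro mult_left_mono powr_mono2) (auto simp: n_def)
            finally show ?thesis .
          qed
          have h3: "k' * real (card W) powr (1+\<epsilon>') \<le> k' * (real (card W) * real n powr \<epsilon>')"
            using assms h2 by (intro mult_left_mono) auto
          have "B * real (card W) = 2 * (k' * (real (card W) * real n powr \<epsilon>'))" by (simp add: B_def)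
          then show "2 * real (card {e\<in>H. e \<subseteq> W}) \<le> B * real (card W)" using h1 h3 by linarith
        qed
        have cl: "real (card (clq r Y H)) \<le> real n * B^(r-1)"
          using clique_bound[OF finY B0 _ dens] assms(1) H2 by (simp add: n_def)
        have nB: "real n * B^(r-1) = (2*k')^(r-1) * ?X"
        proof -
          have "real n * B^(r-1) = (2*k')^(r-1) * (real n * (real n powr \<epsilon>')^(r-1))"
            by (simp add: B_def power_mult_distrib)
          also have "(real n powr \<epsilon>')^(r-1) = real n powr (real (r-1) * \<epsilon>')"
            using npos by (simp add: powr_power)
          also have "real n * real n powr (real (r-1) * \<epsilon>') = real n powr (1 + \<epsilon>' * (real r - 1))"
            using npos assms(1) by (simp add: powr_add of_nat_diff mult.commute)
          finally show ?thesis by (simp add: n_def)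
        qed
        have cH: "real (card H) \<le> k' * ?X"
        proof (cases "r = 1")
          case True
          have "H = {}"
          proof (rule ccontr)
            assume "H \<noteq> {}"
            then obtain q where q: "q \<in> H" by blast
            then have "q \<subseteq> S (g q)" "g q \<in> \<C>" "card q = 2" using g H2 by auto
            moreover have cs: "card (S (g q)) = 1" using S True \<open>g q \<in> \<C>\<close> by auto
            moreover have "finite (S (g q))" using cs by (intro card_ge_0_finite) simp
            ultimately have "card q \<le> 1" using card_mono by metis
            then show False using \<open>card q = 2\<close> by simp
          qed
          then show ?thesis using assms X0 by simp
        next
          case False
          have "real (card H) \<le> k' * real (card Y) powr (1+\<epsilon>')"
            by (rule no1[OF order_refl g(1)]) (use g H2 in auto)
          also have "\<dots> \<le> k' * ?X"
          proof (intro mult_left_mono powr_mono)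
            have "r \<ge> 2" using False assms(1) by linarith
            then have "real r - 1 \<ge> 1" by simp
            then have "\<epsilon>' * 1 \<le> \<epsilon>' * (real r - 1)" using eps by (intro mult_left_mono) auto
            then show "1 + \<epsilon>' \<le> 1 + \<epsilon>' * (real r - 1)" by simp
            show "1 \<le> real (card Y)" using npos by (simp add: n_def)
          qed (use assms in auto)
          finally show ?thesis .
        qed
        have "real (t-1) * real (card (clq r Y H)) \<le> real (t-1) * (real n * B^(r-1))"
          using cl by (intro mult_left_mono) auto
        moreover have "real (t-1) * (real n * B^(r-1)) = real (t-1) * ((2*k')^(r-1) * ?X)" using nB by simp
        ultimately have "real (card \<C>) \<le> k' * ?X + real (t-1) * ((2*k')^(r-1) * ?X)"
          using cC cH by linarith
        also have "\<dots> \<le> \<alpha> * ?X" using X0 by (simp add: \<alpha>_def algebra_simps)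
        finally show ?thesis .
      qed
    qed
    show "?A \<or> ?B \<or> real (card \<C>) \<le> \<alpha> * ?X" by (rule taut3[OF main])
  qed
qed

end
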